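(* Let $f:\mathbb{Z}^n\to\mathbb{R}\cup\{+\infty\}$ be M-convex with bounded $\operatorname{dom} f$, $\emptyset\neq R\subsetneq N$, and $k$ an integer with $\underline{k}\le k\le\overline{k}$. Let $\hat k<k$ be an integer and $x\in M(\hat k)$. Consider the procedure ConstM-IncSlope$(x)$: set $y:=x$; for each $i\in R$ (each exactly once, arbitrary order) and, for this $i$, for each $j\in N\setminus R$ (each exactly once, arbitrary order), if $f'(y;i,j)=\phi^R(x)$ then set $\lambda:=\min\{k-y(R),\bar c(y;i,j)\}$ and replace $y$ by $y+\lambda(\chi_i-\chi_j)$; finally output $x':=y$. If $x'(R)<k$, then $\phi^R(x')>\phi^R(x)$.
   Context: $N=\{1,\dots,n\}$; $\chi_i\in\{0,1\}^n$ is the $i$-th unit vector; $x(R)=\sum_{i\in R}x(i)$. For $f:\mathbb{Z}^n\to\mathbb{R}\cup\{+\infty\}$, $\operatorname{dom} f=\{x\in\mathbb{Z}^n: f(x)<+\infty\}$. $f$ is M-convex if $\operatorname{dom} f\neq\emptyset$ and for all $x,y\in\operatorname{dom} f$ and every $i$ with $x(i)>y(i)$ there is $j$ with $x(j)<y(j)$ such that $f(x)+f(y)\ge f(x-\chi_i+\chi_j)+f(y+\chi_i-\chi_j)$. $f'(x;i,j)=f(x+\chi_i-\chi_j)-f(x)$ (possibly $+\infty$), $\phi^R(x)=\min_{i\in R,\,j\in N\setminus R}f'(x;i,j)$, and $\bar c(y;i,j)=\max\{\lambda\in\mathbb{Z}_{\ge 0}: f(y+\lambda(\chi_i-\chi_j))-f(y)=\lambda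 f'(y;i,j)\}$. $\underline{k}=\min\{x(R):x\in\operatorname{dom} f\}$, $\overline{k}=\max\{x(R):x\in\operatorname{dom} f\}$; for $\underline{k}\le h\le\overline{k}$, $z(h)=\min\{f(x): x(R)=h,\ x\in\operatorname{dom} f\}$ and $M(h)=\{x\in\operatorname{dom} f: x(R)=h,\ f(x)=z(h)\}$. *)

theory Defs
  imports Complex_Main "HOL-Library.Extended_Real"
begin

text \<open>Vectors in Z^n are functions from a finite index type 'n (playing the role of N) to int.
  Functions f take values in ereal; the codomain R \<union> {+\<infinity>} is imposed by assuming f never equals -\<infinity>.\<close>

definition unitv :: "'n \<Rightarrow> 'n \<Rightarrow> int" where
  "unitv i = (\<lambda>l. if l = i then 1 else 0)"

definition mdom :: "(('n::finite \<Rightarrow> int) \<Rightarrow> ereal) \<Rightarrow> ('n \<Rightarrow> int) set" where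
  "mdom f = {x. f x < \<infinity>}"

definition mconvex :: "(('n::finite \<Rightarrow> int) \<Rightarrow> ereal) \<Rightarrow> bool" where
  "mconvex f \<longleftrightarrow> mdom f \<noteq> {} \<and>
     (\<forall>x\<in>mdom f. \<forall>y\<in>mdom f. \<forall>i. x i > y i \<longrightarrow>
        (\<exists>j. x j < y j \<and>
           f x + f y \<ge> f (\<lambda>l. x l - unitv i l + unitv j l) + f (\<lambda>l. y l + unitv i l - unitv j l)))"

definition fder :: "(('n::finite \<Rightarrow> int) \<Rightarrow> ereal) \<Rightarrow> ('n \<Rightarrow> int) \<Rightarrow> 'n \<Rightarrow> 'n \<Rightarrow> ereal" where
  "fder f x i j = f (\<lambda>l. x l + unitv i l - unitv j l) - f x"

definition phiR :: "(('n::finite \<Rightarrow> int) \<Rightarrow> ereal) \<Rightarrow> 'n set \<Rightarrow> ('n \<Rightarrow> int) \<Rightarrow> ereal" where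
  "phiR f R x = (INF p \<in> R \<times> (UNIV - R). fder f x (fst p) (snd p))"

definition cbar :: "(('n::finite \<Rightarrow> int) \<Rightarrow> ereal) \<Rightarrow> ('n \<Rightarrow> int) \<Rightarrow> 'n \<Rightarrow> 'n \<Rightarrow> int" where
  "cbar f y i j = int (GREATEST lam::nat.
      f (\<lambda>l. y l + int lam * (unitv i l - unitv j l)) - f y = ereal (real lam) * fder f y i j)"

definition kmin :: "(('n::finite \<Rightarrow> int) \<Rightarrow> ereal) \<Rightarrow> 'n set \<Rightarrow> int" where
  "kmin f R = Min ((\<lambda>x. sum x R) ` mdom f)"

definition kmax :: "(('n::finite \<Rightarrow> int) \<Rightarrow> ereal) \<Rightarrow> 'n set \<Rightarrow> int" where
  "kmax f R = Max ((\<lambda>x. sum x R) ` mdom f)"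

definition zval :: "(('n::finite \<Rightarrow> int) \<Rightarrow> ereal) \<Rightarrow> 'n set \<Rightarrow> int \<Rightarrow> ereal" where
  "zval f R h = (INF x \<in> {x \<in> mdom f. sum x R = h}. f x)"

definition Mset :: "(('n::finite \<Rightarrow> int) \<Rightarrow> ereal) \<Rightarrow> 'n set \<Rightarrow> int \<Rightarrow> ('n \<Rightarrow> int) set" where
  "Mset f R h = {x \<in> mdom f. sum x R = h \<and> f x = zval f R h}"

definition incslope_step ::
  "(('n::finite \<Rightarrow> int) \<Rightarrow> ereal) \<Rightarrow> 'n set \<Rightarrow> int \<Rightarrow> ('n \<Rightarrow> int) \<Rightarrow> ('n \<Rightarrow> int) \<Rightarrow> 'n \<times> 'n \<Rightarrow> ('n \<Rightarrow> int)" where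
  "incslope_step f R k x y p =
     (let i = fst p; j = snd p in
      if fder f y i j = phiR f R x then
        (let lam = min (k - sum y R) (cbar f y i j) in (\<lambda>l. y l + lam * (unitv i l - unitv j l)))
      else y)"

text \<open>ConstM-IncSlope(x): the outer loop runs over i along the list is (an enumeration of R),
  the inner loop for this i runs along js i (an enumeration of N - R).\<close>
definition incslope ::
  "(('n::finite \<Rightarrow> int) \<Rightarrow> ereal) \<Rightarrow> 'n set \<Rightarrow> int \<Rightarrow> 'n list \<Rightarrow> ('n \<Rightarrow> 'n list) \<Rightarrow> ('n \<Rightarrow> int) \<Rightarrow> ('n \<Rightarrow> int)" where
  "incslope f R k is js x =
     foldl (incslope_step f R k x) x (concat (map (\<lambda>i. map (\<lambda>j. (i, j)) (js i)) is))"

end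

theory Submission
  imports Defs
begin

lemma unitv_simp[simp]: "unitv i l = (if l = i then 1 else 0)"
  by (simp add: unitv_def)

lemma sum_unitv: "finite R \<Longrightarrow> sum (unitv i) R = (if i \<in> R then 1 else 0)"
  by (simp add: unitv_def)

lemma sum_move: fixes y :: "'n::finite \<Rightarrow> int"
  assumes "i \<in> R" "j \<notin> R"
  shows "sum (\<lambda>l. y l + lam * (unitv i l - unitv j l)) R = sum y R + lam"
proof -
  have "sum (\<lambda>l. y l + lam * (unitv i l - unitv j l)) R = sum y R + lam * (sum (unitv i) R - sum (unitv j) R)"
    by (simp add: sum.distrib sum_distrib_left sum_subtractf algebra_simps del: unitv_simp)
  also have "\<dots> = sum y R + lam" using assms by (simp add: sum_unitv del: unitv_simp)
  finally show ?thesis .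
qed

lemma ereal_core:
  fixes W A B :: ereal
  assumes "A + B \<le> W + ereal r" "ereal c \<le> A - ereal r" "ereal c \<le> B - ereal r"
  shows "ereal c \<le> W - ereal (r + c)"
  using assms by (cases W; cases A; cases B) auto

lemma ereal_core_strict:
  fixes W A B :: ereal
  assumes "A + B \<le> W + ereal r" "ereal c < A - ereal r" "ereal c \<le> B - ereal r"
  shows "ereal c < W - ereal (r + c)"
  using assms by (cases W; cases A; cases B) auto

lemma ereal_core_strict2:
  fixes W A B :: ereal
  assumes "A + B \<le> W + ereal r" "ereal c \<le> A - ereal r" "ereal c < B - ereal r"
  shows "ereal c < W - ereal (r + c)"
  using assms by (cases W; cases A; cases B) auto


locale mc =
  fixes f :: "('n::finite \<Rightarrow> int) \<Rightarrow> ereal"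
  assumes noninf: "\<forall>y. f y \<noteq> -\<infinity>" and mconv: "mconvex f"
begin

lemma exch:
  assumes "x \<in> mdom f" "y \<in> mdom f" "x i > y i"
  obtains j where "x j < y j"
    "f (\<lambda>l. x l - unitv i l + unitv j l) + f (\<lambda>l. y l + unitv i l - unitv j l) \<le> f x + f y"
  using mconv assms unfolding mconvex_def by blast

lemma dom_fin: "y \<in> mdom f \<Longrightarrow> \<exists>r. f y = ereal r"
  using noninf by (cases "f y") (auto simp: mdom_def)

lemma sum_lt_top: "(a::ereal) + b \<le> c \<Longrightarrow> c < \<infinity> \<Longrightarrow> a \<noteq> -\<infinity> \<Longrightarrow> b \<noteq> -\<infinity> \<Longrightarrow> a < \<infinity> \<and> b < \<infinity>"
  by (cases a; cases b; cases c) auto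

lemma core_exch:
  assumes y: "y \<in> mdom f" and iR: "i \<in> R" and aR: "a \<in> R" and jR: "j \<notin> R" and bR: "b \<notin> R"
  shows "f (\<lambda>l. y l + unitv a l - unitv b l) + f (\<lambda>l. y l + unitv i l - unitv j l)
           \<le> f (\<lambda>l. (y l + unitv i l - unitv j l) + unitv a l - unitv b l) + f y
       \<or> f (\<lambda>l. y l + unitv a l - unitv j l) + f (\<lambda>l. y l + unitv i l - unitv b l)
           \<le> f (\<lambda>l. (y l + unitv i l - unitv j l) + unitv a l - unitv b l) + f y"
proof (cases "(\<lambda>l. (y l + unitv i l - unitv j l) + unitv a l - unitv b l) \<in> mdom f")
  case False
  then have "f (\<lambda>l. (y l + unitv i l - unitv j l) + unitv a l - unitv b l) = \<infinity>"
    by (auto simp: mdom_def)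
  moreover have "f y \<noteq> -\<infinity>" using noninf by auto
  ultimately show ?thesis by simp
next
  case True
  define W where "W = (\<lambda>l. (y l + unitv i l - unitv j l) + unitv a l - unitv b l)"
  have ij: "i \<noteq> j" "i \<noteq> b" "a \<noteq> j" "a \<noteq> b" using iR aR jR bR by auto
  have "W i > y i" using ij by (auto simp: W_def)
  then obtain l0 where l0: "W l0 < y l0"
    "f (\<lambda>l. W l - unitv i l + unitv l0 l) + f (\<lambda>l. y l + unitv i l - unitv l0 l) \<le> f W + f y"
    using exch[OF True[folded W_def] y] by blast
  have "l0 = j \<or> l0 = b" using l0(1) by (auto simp: W_def split: if_splits)
  then show ?thesis
  proof
    assume "l0 = j"
    moreover have "(\<lambda>l. W l - unitv i l + unitv j l) = (\<lambda>l. y l + unitv a l - unitv b l)"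
      by (auto simp: W_def)
    ultimately show ?thesis using l0(2) by (simp add: W_def)
  next
    assume "l0 = b"
    moreover have "(\<lambda>l. W l - unitv i l + unitv b l) = (\<lambda>l. y l + unitv a l - unitv j l)"
      by (auto simp: W_def)
    ultimately show ?thesis using l0(2) by (simp add: W_def)
  qed
qed

definition yv :: "('n \<Rightarrow> int) \<Rightarrow> 'n \<Rightarrow> 'n \<Rightarrow> nat \<Rightarrow> ('n \<Rightarrow> int)" where
  "yv y i j m = (\<lambda>l. y l + int m * (unitv i l - unitv j l))"

lemma line_exch:
  assumes ij: "i \<noteq> j" and ab: "a < b" and da: "yv y i j a \<in> mdom f" and db: "yv y i j b \<in> mdom f"
  shows "f (yv y i j (b - 1)) + f (yv y i j (a + 1)) \<le> f (yv y i j b) + f (yv y i j a)"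
proof -
  have "yv y i j b i > yv y i j a i" using ij ab by (simp add: yv_def)
  then obtain l0 where l0: "yv y i j b l0 < yv y i j a l0"
    "f (\<lambda>l. yv y i j b l - unitv i l + unitv l0 l) + f (\<lambda>l. yv y i j a l + unitv i l - unitv l0 l)
       \<le> f (yv y i j b) + f (yv y i j a)"
    using exch[OF db da] by blast
  have "l0 = j" using l0(1) ab by (auto simp: yv_def split: if_splits)
  moreover have "(\<lambda>l. yv y i j b l - unitv i l + unitv j l) = yv y i j (b - 1)"
    using ab ij by (auto simp: yv_def of_nat_diff algebra_simps)
  moreover have "(\<lambda>l. yv y i j a l + unitv i l - unitv j l) = yv y i j (a + 1)"
    using ij by (auto simp: yv_def algebra_simps)
  ultimately show ?thesis using l0(2) by simp
qed


lemma yv0[simp]: "yv y i j 0 = y" by (simp add: yv_def)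

lemma yv_Suc: "(\<lambda>l. yv y i j m l + unitv i l - unitv j l) = yv y i j (Suc m)"
  by (auto simp: yv_def algebra_simps)

lemma line_dom:
  assumes ij: "i \<noteq> j"
  shows "yv y i j a \<in> mdom f \<Longrightarrow> yv y i j b \<in> mdom f \<Longrightarrow> a \<le> m \<Longrightarrow> m \<le> b \<Longrightarrow> yv y i j m \<in> mdom f"
proof (induction "b - a" arbitrary: a b rule: less_induct)
  case less
  show ?case
  proof (cases "m = a \<or> m = b")
    case True then show ?thesis using less by auto
  next
    case False
    then have ab: "a < m" "m < b" using less by auto
    have le: "f (yv y i j (b - 1)) + f (yv y i j (a + 1)) \<le> f (yv y i j b) + f (yv y i j a)"
      using line_exch[OF ij _ less(2,3)] ab by simp
    have "f (yv y i j b) + f (yv y i j a) < \<infinity>" using less(2,3) by (auto simp: mdom_def)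
    then have "f (yv y i j (b - 1)) < \<infinity> \<and> f (yv y i j (a + 1)) < \<infinity>"
      using sum_lt_top[OF le] noninf by auto
    then have d: "yv y i j (b - 1) \<in> mdom f" "yv y i j (a + 1) \<in> mdom f" by (auto simp: mdom_def)
    show ?thesis using less(1)[of "b - 1" "a + 1", OF _ d(2) d(1)] ab by auto
  qed
qed

lemma cbar_props:
  assumes bdd: "\<exists>B. \<forall>y\<in>mdom f. \<forall>l. \<bar>y l\<bar> \<le> B"
    and y: "y \<in> mdom f" and ij: "i \<noteq> j" and fd: "fder f y i j = ereal c"
  shows "\<forall>m \<le> nat (cbar f y i j). yv y i j m \<in> mdom f"
    "\<forall>m < nat (cbar f y i j). fder f (yv y i j m) i j = ereal c"
    "fder f (yv y i j (nat (cbar f y i j))) i j \<noteq> ereal c"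
proof -
  obtain B where B: "\<forall>y\<in>mdom f. \<forall>l. \<bar>y l\<bar> \<le> B" using bdd by auto
  obtain r where r: "f y = ereal r" using dom_fin[OF y] by auto
  define P where "P = (\<lambda>lam::nat. f (yv y i j lam) - f y = ereal (real lam) * fder f y i j)"
  have cb: "cbar f y i j = int (Greatest P)" unfolding cbar_def P_def yv_def by simp
  define C where "C = Greatest P"
  have nC: "nat (cbar f y i j) = C" using cb C_def by simp
  have P0: "P 0" using r fd by (simp add: P_def)
  have Pdom: "yv y i j lam \<in> mdom f" if "P lam" for lam
  proof -
    have "f (yv y i j lam) - ereal r = ereal (real lam * c)" using that r fd by (simp add: P_def)
    then show ?thesis by (cases "f (yv y i j lam)") (auto simp: mdom_def)
  qed
  have Pbd: "lam \<le> nat (B - y i)" if "P lam" for lam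
  proof -
    have "\<bar>yv y i j lam i\<bar> \<le> B" using B Pdom[OF that] by blast
    then show ?thesis using ij by (simp add: yv_def)
  qed
  have PC: "P C" unfolding C_def by (rule GreatestI_nat[of P 0 "nat (B - y i)", OF P0 Pbd])
  have Cmax: "lam \<le> C" if "P lam" for lam unfolding C_def by (rule Greatest_le_nat[of P lam "nat (B - y i)", OF that Pbd])
  have domC: "yv y i j C \<in> mdom f" using Pdom[OF PC] .
  have domm: "\<forall>m\<le>C. yv y i j m \<in> mdom f"
    using line_dom[OF ij, of y 0 C] domC y by auto
  then show "\<forall>m \<le> nat (cbar f y i j). yv y i j m \<in> mdom f" using nC by simp
  define g where "g m = real_of_ereal (f (yv y i j m))" for m
  have fg: "f (yv y i j m) = ereal (g m)" if "m \<le> C" for m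
    using dom_fin[OF domm[rule_format, OF that]] by (auto simp: g_def)
  have gC: "g C = r + real C * c"
  proof -
    have "f (yv y i j C) - ereal r = ereal (real C * c)" using PC r fd by (simp add: P_def)
    then show ?thesis using fg[of C] by simp
  qed
  have g0: "g 0 = r" using fg[of 0] r by simp
  have s0: "C > 0 \<Longrightarrow> g 1 - g 0 = c"
  proof -
    assume "C > 0"
    have "fder f (yv y i j 0) i j = ereal c" using fd by simp
    then have "f (yv y i j 1) - f (yv y i j 0) = ereal c" unfolding fder_def yv_Suc by simp
    then show ?thesis using fg[of 0] fg[of 1] \<open>C > 0\<close> by simp
  qed
  have mono: "g (t + 1) - g t \<le> g (s + 1) - g s" if "t \<le> s" "s < C" for t s
  proof (cases "t = s")
    case False
    then have "t < s" using that by simp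
    have "f (yv y i j (s + 1 - 1)) + f (yv y i j (t + 1)) \<le> f (yv y i j (s + 1)) + f (yv y i j t)"
      using line_exch[OF ij, of t "s+1" y] \<open>t < s\<close> domm that by auto
    then show ?thesis using fg[of s] fg[of "t+1"] fg[of "s+1"] fg[of t] that \<open>t < s\<close> by simp
  qed simp
  have slope: "g (m + 1) - g m = c" if "m < C" for m
  proof -
    have ge: "\<forall>m<C. c \<le> g (m + 1) - g m" using mono[of 0] s0 by auto
    have "(\<Sum>m<C. g (m + 1) - g m) = g C - g 0"
      using sum_lessThan_telescope[of g C] by simp
    then have "(\<Sum>m<C. (g (m + 1) - g m) - c) = 0" using gC g0 by (simp add: sum_subtractf)
    then have "\<forall>m\<in>{..<C}. (g (m + 1) - g m) - c = 0"
      by (subst sum_nonneg_eq_0_iff[symmetric]) (use ge in auto)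
    then show ?thesis using that by auto
  qed
  show "\<forall>m < nat (cbar f y i j). fder f (yv y i j m) i j = ereal c"
  proof (intro allI impI)
    fix m assume "m < nat (cbar f y i j)"
    then have m: "m < C" using nC by simp
    have "fder f (yv y i j m) i j = f (yv y i j (Suc m)) - f (yv y i j m)"
      unfolding fder_def yv_Suc ..
    also have "\<dots> = ereal c" using fg[of m] fg[of "Suc m"] m slope[OF m] by simp
    finally show "fder f (yv y i j m) i j = ereal c" .
  qed
  show "fder f (yv y i j (nat (cbar f y i j))) i j \<noteq> ereal c"
  proof
    assume "fder f (yv y i j (nat (cbar f y i j))) i j = ereal c"
    then have "f (yv y i j (Suc C)) - f (yv y i j C) = ereal c"
      unfolding fder_def nC yv_Suc .
    then have "f (yv y i j (Suc C)) = ereal (g C + c)" using fg[of C]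
      by (cases "f (yv y i j (Suc C))") auto
    then have "P (Suc C)" using r fd gC by (simp add: P_def algebra_simps)
    then show False using Cmax by fastforce
  qed
qed


lemma usl:
  assumes y: "y \<in> mdom f"
    and ge: "\<forall>a\<in>R. \<forall>b. b \<notin> R \<longrightarrow> ereal c \<le> fder f y a b"
    and gt: "\<forall>p\<in>P. ereal c < fder f y (fst p) (snd p)"
    and PR: "P \<subseteq> R \<times> (- R)"
    and iR: "i \<in> R" and jR: "j \<notin> R"
    and cl: "\<forall>q\<in>P. fst q \<noteq> i \<longrightarrow> (fst q, j) \<in> P"
    and fd: "fder f y i j = ereal c"
  shows "(\<lambda>l. y l + unitv i l - unitv j l) \<in> mdom f"
    "\<forall>a\<in>R. \<forall>b. b \<notin> R \<longrightarrow> ereal c \<le> fder f (\<lambda>l. y l + unitv i l - unitv j l) a b"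
    "\<forall>p\<in>P. ereal c < fder f (\<lambda>l. y l + unitv i l - unitv j l) (fst p) (snd p)"
proof -
  obtain r where r: "f y = ereal r" using dom_fin[OF y] by auto
  have fy': "f (\<lambda>l. y l + unitv i l - unitv j l) = ereal (r + c)"
    using fd r unfolding fder_def by (cases "f (\<lambda>l. y l + unitv i l - unitv j l)") auto
  then show "(\<lambda>l. y l + unitv i l - unitv j l) \<in> mdom f" by (simp add: mdom_def)
  have fdy: "fder f y a b = f (\<lambda>l. y l + unitv a l - unitv b l) - ereal r" for a b
    unfolding fder_def r ..
  have fdy': "fder f (\<lambda>l. y l + unitv i l - unitv j l) a b =
      f (\<lambda>l. (y l + unitv i l - unitv j l) + unitv a l - unitv b l) - ereal (r + c)" for a b
    unfolding fder_def fy' ..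
  show "\<forall>a\<in>R. \<forall>b. b \<notin> R \<longrightarrow> ereal c \<le> fder f (\<lambda>l. y l + unitv i l - unitv j l) a b"
  proof (intro ballI allI impI)
    fix a b assume aR: "a \<in> R" and bR: "b \<notin> R"
    from core_exch[OF y iR aR jR bR] show "ereal c \<le> fder f (\<lambda>l. y l + unitv i l - unitv j l) a b"
    proof
      assume h: "f (\<lambda>l. y l + unitv a l - unitv b l) + f (\<lambda>l. y l + unitv i l - unitv j l)
           \<le> f (\<lambda>l. (y l + unitv i l - unitv j l) + unitv a l - unitv b l) + f y"
      show ?thesis unfolding fdy'
        by (rule ereal_core[OF h[unfolded r]]) (use ge aR bR fd iR jR fdy in auto)
    next
      assume h: "f (\<lambda>l. y l + unitv a l - unitv j l) + f (\<lambda>l. y l + unitv i l - unitv b l)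
           \<le> f (\<lambda>l. (y l + unitv i l - unitv j l) + unitv a l - unitv b l) + f y"
      show ?thesis unfolding fdy'
        by (rule ereal_core[OF h[unfolded r]]) (use ge aR bR fd iR jR fdy in auto)
    qed
  qed
  show "\<forall>p\<in>P. ereal c < fder f (\<lambda>l. y l + unitv i l - unitv j l) (fst p) (snd p)"
  proof
    fix p assume pP: "p \<in> P"
    obtain a b where p: "p = (a, b)" by (cases p)
    have aR: "a \<in> R" and bR: "b \<notin> R" using PR pP p by auto
    have gab: "ereal c < fder f y a b" using gt pP p by auto
    from core_exch[OF y iR aR jR bR] show "ereal c < fder f (\<lambda>l. y l + unitv i l - unitv j l) (fst p) (snd p)"
    proof
      assume h: "f (\<lambda>l. y l + unitv a l - unitv b l) + f (\<lambda>l. y l + unitv i l - unitv j l)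
           \<le> f (\<lambda>l. (y l + unitv i l - unitv j l) + unitv a l - unitv b l) + f y"
      show ?thesis unfolding p fst_conv snd_conv fdy'
        by (rule ereal_core_strict[OF h[unfolded r]]) (use gab fd fdy in auto)
    next
      assume h: "f (\<lambda>l. y l + unitv a l - unitv j l) + f (\<lambda>l. y l + unitv i l - unitv b l)
           \<le> f (\<lambda>l. (y l + unitv i l - unitv j l) + unitv a l - unitv b l) + f y"
      show ?thesis
      proof (cases "a = i")
        case True
        show ?thesis unfolding p fst_conv snd_conv fdy'
          by (rule ereal_core_strict2[OF h[unfolded r]]) (use gab fd fdy True in auto)
      next
        case False
        then have "(a, j) \<in> P" using cl pP p by auto
        then have "ereal c < fder f y a j" using gt by auto
        then show ?thesis unfolding p fst_conv snd_conv fdy'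
          by (intro ereal_core_strict[OF h[unfolded r]]) (use ge iR bR fdy in auto)
      qed
    qed
  qed
qed


definition inv :: "'n set \<Rightarrow> int \<Rightarrow> real \<Rightarrow> ('n \<times> 'n) set \<Rightarrow> ('n \<Rightarrow> int) \<Rightarrow> bool" where
  "inv R k c P y \<longleftrightarrow> y \<in> mdom f \<and> sum y R \<le> k \<and>
     (\<forall>a\<in>R. \<forall>b. b \<notin> R \<longrightarrow> ereal c \<le> fder f y a b) \<and>
     (sum y R < k \<longrightarrow> (\<forall>p\<in>P. ereal c < fder f y (fst p) (snd p)))"

lemma step_inv:
  assumes bdd: "\<exists>B. \<forall>y\<in>mdom f. \<forall>l. \<bar>y l\<bar> \<le> B"
    and phi: "phiR f R x = ereal c"
    and I: "inv R k c P y" and PR: "P \<subseteq> R \<times> (- R)"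
    and iR: "i \<in> R" and jR: "j \<notin> R"
    and cl: "\<forall>q\<in>P. fst q \<noteq> i \<longrightarrow> (fst q, j) \<in> P"
  shows "inv R k c (insert (i, j) P) (incslope_step f R k x y (i, j))"
proof -
  have y: "y \<in> mdom f" and yk: "sum y R \<le> k"
    and ge: "\<forall>a\<in>R. \<forall>b. b \<notin> R \<longrightarrow> ereal c \<le> fder f y a b"
    and gt: "sum y R < k \<Longrightarrow> \<forall>p\<in>P. ereal c < fder f y (fst p) (snd p)"
    using I by (auto simp: inv_def)
  have ij: "i \<noteq> j" using iR jR by auto
  show ?thesis
  proof (cases "fder f y i j = ereal c")
    case False
    then have st: "incslope_step f R k x y (i, j) = y" using phi by (simp add: incslope_step_def)
    have "ereal c < fder f y i j" using False ge iR jR by (metis order_le_less)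
    then show ?thesis unfolding st using I by (simp add: inv_def)
  next
    case fd: True
    define lam where "lam = min (k - sum y R) (cbar f y i j)"
    have st: "incslope_step f R k x y (i, j) = (\<lambda>l. y l + lam * (unitv i l - unitv j l))"
      using phi fd by (simp add: incslope_step_def lam_def Let_def del: unitv_simp)
    have cb0: "cbar f y i j \<ge> 0" by (simp add: cbar_def)
    show ?thesis
    proof (cases "sum y R < k")
      case False
      then have "lam = 0" using yk cb0 by (simp add: lam_def)
      then have "incslope_step f R k x y (i, j) = y" using st by simp
      then show ?thesis using I False yk by (simp add: inv_def)
    next
      case yk': True
      define m where "m = nat lam"
      have lm: "lam = int m" using yk' cb0 by (simp add: m_def lam_def)
      have "lam \<le> cbar f y i j" by (simp add: lam_def)
      then have mC: "m \<le> nat (cbar f y i j)" unfolding m_def by (rule nat_mono)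
      note cp = cbar_props[OF bdd y ij fd]
      have ind: "t \<le> m \<longrightarrow> yv y i j t \<in> mdom f \<and>
          (\<forall>a\<in>R. \<forall>b. b \<notin> R \<longrightarrow> ereal c \<le> fder f (yv y i j t) a b) \<and>
          (\<forall>p\<in>P. ereal c < fder f (yv y i j t) (fst p) (snd p))" for t
      proof (induction t)
        case 0 then show ?case using y ge gt[OF yk'] by simp
      next
        case (Suc t)
        show ?case
        proof
          assume "Suc t \<le> m"
          then have IH: "yv y i j t \<in> mdom f"
              "\<forall>a\<in>R. \<forall>b. b \<notin> R \<longrightarrow> ereal c \<le> fder f (yv y i j t) a b"
              "\<forall>p\<in>P. ereal c < fder f (yv y i j t) (fst p) (snd p)" using Suc by auto
          have "fder f (yv y i j t) i j = ereal c" using cp(2) \<open>Suc t \<le> m\<close> mC by auto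
          from usl[OF IH PR iR jR cl this] show "yv y i j (Suc t) \<in> mdom f \<and>
          (\<forall>a\<in>R. \<forall>b. b \<notin> R \<longrightarrow> ereal c \<le> fder f (yv y i j (Suc t)) a b) \<and>
          (\<forall>p\<in>P. ereal c < fder f (yv y i j (Suc t)) (fst p) (snd p))"
            unfolding yv_Suc by blast
        qed
      qed
      have st2: "incslope_step f R k x y (i, j) = yv y i j m" using st lm by (simp add: yv_def)
      have sm: "sum (yv y i j m) R = sum y R + lam"
        unfolding yv_def lm using sum_move[OF iR jR] by simp
      have A: "yv y i j m \<in> mdom f" "\<forall>a\<in>R. \<forall>b. b \<notin> R \<longrightarrow> ereal c \<le> fder f (yv y i j m) a b"
          "\<forall>p\<in>P. ereal c < fder f (yv y i j m) (fst p) (snd p)" using ind[of m] by auto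
      have B: "ereal c < fder f (yv y i j m) i j" if "sum (yv y i j m) R < k"
      proof -
        have "lam = cbar f y i j" using that sm by (simp add: lam_def min_def split: if_splits)
        then have "m = nat (cbar f y i j)" using lm by simp
        then have "fder f (yv y i j m) i j \<noteq> ereal c" using cp(3) by simp
        then show ?thesis using A(2) iR jR by (metis order_le_less)
      qed
      have "sum (yv y i j m) R \<le> k" using sm by (simp add: lam_def)
      then show ?thesis unfolding st2 inv_def using A B by auto
    qed
  qed
qed


lemma inner:
  assumes bdd: "\<exists>B. \<forall>y\<in>mdom f. \<forall>l. \<bar>y l\<bar> \<le> B"
    and phi: "phiR f R x = ereal c" and iR: "i \<in> R"
  shows "\<forall>y P. set bs \<subseteq> - R \<longrightarrow> inv R k c P y \<longrightarrow> P \<subseteq> R \<times> (- R) \<longrightarrow>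
     (\<forall>q\<in>P. fst q \<noteq> i \<longrightarrow> (\<forall>b. b \<notin> R \<longrightarrow> (fst q, b) \<in> P)) \<longrightarrow>
     inv R k c (P \<union> {i} \<times> set bs) (foldl (incslope_step f R k x) y (map (\<lambda>b. (i, b)) bs))"
proof (induction bs)
  case Nil then show ?case by simp
next
  case (Cons b bs)
  show ?case
  proof (intro allI impI)
    fix y P assume h: "set (b # bs) \<subseteq> - R" "inv R k c P y" "P \<subseteq> R \<times> (- R)"
      "\<forall>q\<in>P. fst q \<noteq> i \<longrightarrow> (\<forall>b. b \<notin> R \<longrightarrow> (fst q, b) \<in> P)"
    have bR: "b \<notin> R" using h(1) by auto
    have I1: "inv R k c (insert (i, b) P) (incslope_step f R k x y (i, b))"
      by (rule step_inv[OF bdd phi h(2) h(3) iR bR]) (use h(4) bR in auto)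
    have "inv R k c (insert (i, b) P \<union> {i} \<times> set bs)
        (foldl (incslope_step f R k x) (incslope_step f R k x y (i, b)) (map (\<lambda>b. (i, b)) bs))"
    proof -
      have cl': "\<forall>q\<in>insert (i, b) P. fst q \<noteq> i \<longrightarrow> (\<forall>b'. b' \<notin> R \<longrightarrow> (fst q, b') \<in> insert (i, b) P)"
        using h(4) by auto
      show ?thesis by (rule Cons.IH[rule_format, OF _ I1]) (use h iR bR cl' in auto)
    qed
    moreover have "insert (i, b) P \<union> {i} \<times> set bs = P \<union> {i} \<times> set (b # bs)" by auto
    ultimately show "inv R k c (P \<union> {i} \<times> set (b # bs))
        (foldl (incslope_step f R k x) y (map (\<lambda>b. (i, b)) (b # bs)))" by simp
  qed
qed

lemma outer:
  assumes bdd: "\<exists>B. \<forall>y\<in>mdom f. \<forall>l. \<bar>y l\<bar> \<le> B"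
    and phi: "phiR f R x = ereal c"
    and js: "\<forall>i\<in>R. set (js i) = - R"
  shows "\<forall>y P. set is \<subseteq> R \<longrightarrow> inv R k c P y \<longrightarrow> P \<subseteq> R \<times> (- R) \<longrightarrow>
     (\<forall>q\<in>P. \<forall>b. b \<notin> R \<longrightarrow> (fst q, b) \<in> P) \<longrightarrow>
     inv R k c (P \<union> set is \<times> (- R))
       (foldl (incslope_step f R k x) y (concat (map (\<lambda>i. map (\<lambda>j. (i, j)) (js i)) is)))"
proof (induction "is")
  case Nil then show ?case by simp
next
  case (Cons i "is")
  show ?case
  proof (intro allI impI)
    fix y P assume h: "set (i # is) \<subseteq> R" "inv R k c P y" "P \<subseteq> R \<times> (- R)"
      "\<forall>q\<in>P. \<forall>b. b \<notin> R \<longrightarrow> (fst q, b) \<in> P"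
    have iR: "i \<in> R" using h(1) by auto
    have I1: "inv R k c (P \<union> {i} \<times> set (js i)) (foldl (incslope_step f R k x) y (map (\<lambda>b. (i, b)) (js i)))"
      using inner[OF bdd phi iR, where bs="js i"] h js iR by auto
    have e: "P \<union> {i} \<times> set (js i) = P \<union> {i} \<times> (- R)" using js iR by auto
    have I2: "inv R k c (P \<union> {i} \<times> (- R) \<union> set is \<times> (- R))
       (foldl (incslope_step f R k x) (foldl (incslope_step f R k x) y (map (\<lambda>b. (i, b)) (js i)))
          (concat (map (\<lambda>i. map (\<lambda>j. (i, j)) (js i)) is)))"
      by (rule Cons.IH[rule_format, OF _ I1[unfolded e]]) (use h iR in auto)
    moreover have "P \<union> {i} \<times> (- R) \<union> set is \<times> (- R) = P \<union> set (i # is) \<times> (- R)" by auto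
    ultimately show "inv R k c (P \<union> set (i # is) \<times> (- R))
       (foldl (incslope_step f R k x) y (concat (map (\<lambda>i. map (\<lambda>j. (i, j)) (js i)) (i # is))))"
      by simp
  qed
qed

lemma exist_pair:
  assumes x: "x \<in> mdom f"
  shows "z \<in> mdom f \<Longrightarrow> sum z R > sum x R \<Longrightarrow> \<exists>i\<in>R. \<exists>j. j \<notin> R \<and> (\<lambda>l. x l + unitv i l - unitv j l) \<in> mdom f"
proof (induction "nat (\<Sum>l\<in>UNIV. \<bar>z l - x l\<bar>)" arbitrary: z rule: less_induct)
  case less
  obtain i where iR: "i \<in> R" and zi: "z i > x i"
  proof -
    have "\<not> (\<forall>i\<in>R. z i \<le> x i)"
    proof
      assume "\<forall>i\<in>R. z i \<le> x i"
      then have "sum z R \<le> sum x R" by (auto intro: sum_mono)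
      then show False using less(3) by simp
    qed
    then show ?thesis using that by force
  qed
  obtain j where zj: "z j < x j" and le:
    "f (\<lambda>l. z l - unitv i l + unitv j l) + f (\<lambda>l. x l + unitv i l - unitv j l) \<le> f z + f x"
    using exch[OF less(2) x zi] by blast
  have "f z + f x < \<infinity>" using less(2) x by (auto simp: mdom_def)
  then have fin: "f (\<lambda>l. z l - unitv i l + unitv j l) < \<infinity>" "f (\<lambda>l. x l + unitv i l - unitv j l) < \<infinity>"
    using sum_lt_top[OF le] noninf by auto
  show ?case
  proof (cases "j \<in> R")
    case False then show ?thesis using iR fin by (auto simp: mdom_def)
  next
    case True
    define z' where "z' = (\<lambda>l. z l - unitv i l + unitv j l)"
    have ij: "i \<noteq> j" using zi zj by auto
    have z'd: "z' \<in> mdom f" using fin by (simp add: mdom_def z'_def)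
    have "sum z' R = sum z R + (sum (unitv j) R - sum (unitv i) R)"
      by (simp add: z'_def sum.distrib sum_subtractf del: unitv_simp)
    also have "\<dots> = sum z R" using iR True by (simp add: sum_unitv del: unitv_simp)
    finally have sz: "sum z' R = sum z R" .
    have lt: "(\<Sum>l\<in>UNIV. \<bar>z' l - x l\<bar>) < (\<Sum>l\<in>UNIV. \<bar>z l - x l\<bar>)"
    proof (rule sum_strict_mono_ex1)
      show "\<forall>l\<in>UNIV. \<bar>z' l - x l\<bar> \<le> \<bar>z l - x l\<bar>" using zi zj ij by (auto simp: z'_def)
      show "\<exists>l\<in>UNIV. \<bar>z' l - x l\<bar> < \<bar>z l - x l\<bar>" using zi ij by (auto simp: z'_def intro!: bexI[of _ i])
    qed simp
    have "nat (\<Sum>l\<in>UNIV. \<bar>z' l - x l\<bar>) < nat (\<Sum>l\<in>UNIV. \<bar>z l - x l\<bar>)"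
    proof -
      have "0 \<le> (\<Sum>l\<in>UNIV. \<bar>z' l - x l\<bar>)" by (simp add: sum_nonneg)
      then show ?thesis using lt nat_less_eq_zless by blast
    qed
    from less(1)[OF this z'd] show ?thesis using sz less(3) by simp
  qed
qed

end

lemma Inf_fin_in: "finite A \<Longrightarrow> A \<noteq> {} \<Longrightarrow> Inf (A::ereal set) \<in> A"
  by (rule finite_Inf_in) (auto simp: inf_min min_def)


theorem mainTheorem12:
  fixes f :: "('n::finite \<Rightarrow> int) \<Rightarrow> ereal"
    and R :: "'n set" and k khat :: int and x :: "'n \<Rightarrow> int"
    and "is" :: "'n list" and js :: "'n \<Rightarrow> 'n list"
  assumes noninf: "\<forall>y. f y \<noteq> -\<infinity>"
    and mconv: "mconvex f"
    and bdd: "\<exists>B. \<forall>y\<in>mdom f. \<forall>l. \<bar>y l\<bar> \<le> B"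
    and Rne: "R \<noteq> {}" and Rproper: "R \<noteq> UNIV"
    and klo: "kmin f R \<le> k" and khi: "k \<le> kmax f R"
    and khat: "khat < k"
    and xM: "x \<in> Mset f R khat"
    and is_enum: "distinct is" "set is = R"
    and js_enum: "\<forall>i\<in>R. distinct (js i) \<and> set (js i) = UNIV - R"
    and small: "sum (incslope f R k is js x) R < k"
  shows "phiR f R (incslope f R k is js x) > phiR f R x"
proof -
  interpret mc f using noninf mconv by unfold_locales
  have xd: "x \<in> mdom f" and sx: "sum x R = khat" using xM by (auto simp: Mset_def)
  obtain B where B: "\<forall>y\<in>mdom f. \<forall>l. \<bar>y l\<bar> \<le> B" using bdd by auto
  define S where "S = (\<lambda>y. sum y R) ` mdom f"
  have Ssub: "S \<subseteq> {- (of_nat (card R) * B) .. of_nat (card R) * B}"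
  proof
    fix t assume "t \<in> S"
    then obtain y where y: "y \<in> mdom f" and t: "t = sum y R" by (auto simp: S_def)
    have "sum y R \<le> sum (\<lambda>_. B) R" by (rule sum_mono) (use B y in \<open>force simp: abs_le_iff\<close>)
    moreover have "sum (\<lambda>_. - B) R \<le> sum y R"
    proof (rule sum_mono)
      fix l assume "l \<in> R"
      have "\<bar>y l\<bar> \<le> B" using B y by blast
      then show "- B \<le> y l" by linarith
    qed
    ultimately show "t \<in> {- (of_nat (card R) * B) .. of_nat (card R) * B}" using t by simp
  qed
  have Sfin: "finite S" using Ssub finite_subset by blast
  have Sne: "S \<noteq> {}" using mconv by (auto simp: S_def mconvex_def)
  have "kmax f R \<in> S" unfolding kmax_def S_def[symmetric] using Max_in[OF Sfin Sne] .
  then obtain z where zd: "z \<in> mdom f" and sz: "sum z R = kmax f R" by (auto simp: S_def)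
  have "sum z R > sum x R" using sz sx khat khi by simp
  then obtain i0 j0 where i0: "i0 \<in> R" and j0: "j0 \<notin> R"
    and d0: "(\<lambda>l. x l + unitv i0 l - unitv j0 l) \<in> mdom f"
    using exist_pair[OF xd zd] by blast
  obtain r where r: "f x = ereal r" using dom_fin[OF xd] by auto
  define A where "A = (\<lambda>p. fder f x (fst p) (snd p)) ` (R \<times> (UNIV - R))"
  have Afin: "finite A" and Ane: "A \<noteq> {}" using i0 j0 by (auto simp: A_def)
  have phiA: "phiR f R x = Inf A" by (simp add: phiR_def A_def)
  have "phiR f R x \<in> A" using Inf_fin_in[OF Afin Ane] phiA by simp
  then obtain a b where "phiR f R x = fder f x a b" by (auto simp: A_def)
  then have pninf: "phiR f R x \<noteq> -\<infinity>" using noninf r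
    by (cases "f (\<lambda>l. x l + unitv a l - unitv b l)") (auto simp: fder_def)
  have "phiR f R x \<le> fder f x i0 j0" unfolding phiR_def
    by (rule INF_lower2[of "(i0, j0)"]) (use i0 j0 in auto)
  moreover have "fder f x i0 j0 < \<infinity>" using d0 r
    by (cases "f (\<lambda>l. x l + unitv i0 l - unitv j0 l)") (auto simp: fder_def mdom_def simp del: unitv_simp)
  ultimately obtain c where phi: "phiR f R x = ereal c" using pninf
    by (cases "phiR f R x") auto
  have ge0: "\<forall>a\<in>R. \<forall>b. b \<notin> R \<longrightarrow> ereal c \<le> fder f x a b"
  proof (intro ballI allI impI)
    fix a b assume "a \<in> R" "b \<notin> R"
    then have "phiR f R x \<le> fder f x a b" unfolding phiR_def by (intro INF_lower2[of "(a, b)"]) auto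
    then show "ereal c \<le> fder f x a b" using phi by simp
  qed
  have I0: "inv R k c {} x" using xd sx khat ge0 by (simp add: inv_def)
  have js': "\<forall>i\<in>R. set (js i) = - R" using js_enum by (auto simp: Compl_eq_Diff_UNIV)
  have I: "inv R k c ({} \<union> set is \<times> (- R)) (incslope f R k is js x)"
    unfolding incslope_def using outer[OF bdd phi js', rule_format, OF _ I0] is_enum by auto
  then have gt: "\<forall>p\<in>R \<times> (- R). ereal c < fder f (incslope f R k is js x) (fst p) (snd p)"
    using small is_enum by (simp add: inv_def)
  define A' where "A' = (\<lambda>p. fder f (incslope f R k is js x) (fst p) (snd p)) ` (R \<times> (UNIV - R))"
  have Afin': "finite A'" and Ane': "A' \<noteq> {}" using i0 j0 by (auto simp: A'_def)
  have "phiR f R (incslope f R k is js x) \<in> A'"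
    using Inf_fin_in[OF Afin' Ane'] by (simp add: phiR_def A'_def)
  then show ?thesis using gt phi by (auto simp: A'_def Compl_eq_Diff_UNIV)
qed

end
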